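(* For any $c\in\mathbb{R}$ and any $\lambda\in\mathbb{Z}\setminus\{0,1\}$, the equation $$\mu(u_t)-u_{txx}+\lambda\mu(u)u_x=\lambda u_xu_{xx}+uu_{xxx}$$ admits the peaked period-one traveling-wave solution $u(t,x)=\varphi(x-ct)$, where $$\varphi(x)=\frac{c}{26}\big(12x^2+23\big)\quad\text{for }x\in[-\tfrac12,\tfrac12],$$ and $\varphi$ is extended periodically (with period $1$) to the real line.
   Context: Here $u(t,\cdot)$ is a $1$-periodic function on $\mathbb{R}$ (a function on $S^1=\mathbb{R}/\mathbb{Z}$) and $\mu(u)=\int_0^1u\,dx$. Since $\varphi$ is not smooth at $x\equiv\frac12\pmod 1$, the solution is understood in the weak sense, i.e. as a distributional solution of $u_t+uu_x+\Lambda_\mu^{-2}\partial_x\big(\lambda\mu(u)u+\frac{3-\lambda}{2}u_x^2\big)=0$, where $\Lambda_\mu^{-2}$ is the inverse of $\Lambda_\mu^2v=\mu(v)-v_{xx}$. *)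

theory Defs
  imports "HOL-Analysis.Analysis"
begin

definition mu :: "(real \<Rightarrow> real) \<Rightarrow> real" where
  "mu f = integral {0..1} f"

definition periodic1 :: "(real \<Rightarrow> real) \<Rightarrow> bool" where
  "periodic1 f \<longleftrightarrow> (\<forall>x. f (x + 1) = f x)"

definition smooth1 :: "(real \<Rightarrow> real) \<Rightarrow> bool" where
  "smooth1 f \<longleftrightarrow> (\<forall>n x. ((deriv ^^ n) f) differentiable (at x))"

text \<open>C^k functions of two real variables (t,x); partial derivatives taken
  from the Frechet derivative in directions (1,0) and (0,1).\<close>
fun Ck2 :: "nat \<Rightarrow> (real \<times> real \<Rightarrow> real) \<Rightarrow> bool" where
  "Ck2 0 f = continuous_on UNIV f"
| "Ck2 (Suc n) f = ((\<forall>p. f differentiable (at p))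
      \<and> Ck2 n (\<lambda>p. frechet_derivative f (at p) (1, 0))
      \<and> Ck2 n (\<lambda>p. frechet_derivative f (at p) (0, 1)))"

definition smooth2 :: "(real \<times> real \<Rightarrow> real) \<Rightarrow> bool" where
  "smooth2 f \<longleftrightarrow> (\<forall>n. Ck2 n f)"

definition test_fun2 :: "(real \<times> real \<Rightarrow> real) \<Rightarrow> bool" where
  "test_fun2 \<psi> \<longleftrightarrow> smooth2 \<psi> \<and> bounded {p. \<psi> p \<noteq> 0}"

text \<open>w is (a representative of) Lambda_mu^{-2} d/dx F, in the distributional sense on
  the circle: w is 1-periodic and, for every smooth 1-periodic psi,
  int_0^1 w (mu(psi) - psi'') dx = - int_0^1 F psi' dx,
  i.e. Lambda_mu^2 w = d/dx F as periodic distributions (Lambda_mu^2 is symmetric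
  and invertible on periodic distributions, so this determines w a.e.).\<close>
definition is_Lambda_inv_dx :: "(real \<Rightarrow> real) \<Rightarrow> (real \<Rightarrow> real) \<Rightarrow> bool" where
  "is_Lambda_inv_dx F w \<longleftrightarrow> periodic1 w \<and>
     (\<forall>\<psi>. smooth1 \<psi> \<and> periodic1 \<psi> \<longrightarrow>
        (\<lambda>x. w x * (mu \<psi> - deriv (deriv \<psi>) x)) integrable_on {0..1} \<and>
        (\<lambda>x. F x * deriv \<psi> x) integrable_on {0..1} \<and>
        integral {0..1} (\<lambda>x. w x * (mu \<psi> - deriv (deriv \<psi>) x))
          = - integral {0..1} (\<lambda>x. F x * deriv \<psi> x))"

text \<open>Weak (distributional) solution u(t,x) of
  u_t + u u_x + Lambda_mu^{-2} d/dx (lam mu(u) u + (3-lam)/2 u_x^2) = 0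
  on R x S^1.  ux is the weak x-derivative of u (u(t,.) absolutely continuous),
  w(t,.) = Lambda_mu^{-2} d/dx F(t,.), and the equation holds against all
  smooth compactly supported test functions on R x R.\<close>
definition weak_solution :: "real \<Rightarrow> (real \<Rightarrow> real \<Rightarrow> real) \<Rightarrow> bool" where
  "weak_solution lam u \<longleftrightarrow>
     continuous_on UNIV (\<lambda>p. u (fst p) (snd p)) \<and>
     (\<forall>t. periodic1 (u t)) \<and>
     (\<exists>ux w.
        (\<forall>t a b. a \<le> b \<longrightarrow> ((ux t) has_integral (u t b - u t a)) {a..b}) \<and>
        (\<forall>t. is_Lambda_inv_dx
               (\<lambda>x. lam * mu (u t) * u t x + (3 - lam) / 2 * (ux t x)\<^sup>2) (w t)) \<and>
        (\<forall>\<psi>. test_fun2 \<psi> \<longrightarrow>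
           ((\<lambda>p. u (fst p) (snd p) * frechet_derivative \<psi> (at p) (1, 0)
                 + (u (fst p) (snd p))\<^sup>2 / 2 * frechet_derivative \<psi> (at p) (0, 1)
                 - w (fst p) (snd p) * \<psi> p) has_integral 0) UNIV))"

text \<open>Periodic extension (period 1) of x \<mapsto> c/26 (12 x^2 + 23) from [-1/2,1/2];
  x - round-half-up(x) lies in [-1/2,1/2).\<close>
definition phi :: "real \<Rightarrow> real \<Rightarrow> real" where
  "phi c x = c / 26 * (12 * (x - of_int \<lfloor>x + 1/2\<rfloor>)\<^sup>2 + 23)"

end

theory Submission imports Defs begin

definition per :: "(real \<Rightarrow> real) \<Rightarrow> real \<Rightarrow> real" where
  "per g x = g (x - of_int \<lfloor>x + 1/2\<rfloor>)"

definition sh :: "real \<Rightarrow> real" where "sh x = x - of_int \<lfloor>x + 1/2\<rfloor>"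

lemma sh_range: "-1/2 \<le> sh x" "sh x < 1/2"
  unfolding sh_def using of_int_floor_le[of "x+1/2"] real_of_int_floor_add_one_gt[of "x+1/2"]
  by linarith+

lemma per_sh: "per g x = g (sh x)" by (simp add: per_def sh_def)

lemma per_periodic: "per g (x + 1) = per g x"
proof -
  have "\<lfloor>x + 1 + 1/2\<rfloor> = \<lfloor>x + 1/2\<rfloor> + 1"
    using floor_add_int[of "x+1/2" 1] by (simp add: algebra_simps)
  then show ?thesis by (simp add: per_def)
qed

lemma per_right: "\<forall>\<^sub>F y in at_right x. per g y = g (y - of_int \<lfloor>x+1/2\<rfloor>)"
proof -
  let ?k = "\<lfloor>x+1/2\<rfloor>"
  have a: "of_int ?k \<le> x + 1/2" "x + 1/2 < of_int ?k + 1"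
    using sh_range[of x] unfolding sh_def by linarith+
  have "\<forall>y>x. y < of_int ?k + 1/2 \<longrightarrow> per g y = g (y - of_int ?k)"
  proof (intro allI impI)
    fix y assume "x < y" "y < of_int ?k + 1/2"
    then have "\<lfloor>y + 1/2\<rfloor> = ?k" using a by (intro floor_unique) linarith+
    then show "per g y = g (y - of_int ?k)" by (simp add: per_def)
  qed
  moreover have "x < of_int ?k + 1/2" using sh_range[of x] unfolding sh_def by linarith
  ultimately show ?thesis unfolding eventually_at_right_field by blast
qed

definition jj :: "real \<Rightarrow> int" where
  "jj x = (if sh x = -1/2 then \<lfloor>x+1/2\<rfloor> - 1 else \<lfloor>x+1/2\<rfloor>)"

lemma per_left: "\<forall>\<^sub>F y in at_left x. per g y = g (y - of_int (jj x))"
proof -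
  let ?k = "\<lfloor>x+1/2\<rfloor>"
  have a: "of_int ?k \<le> x + 1/2" "x + 1/2 < of_int ?k + 1"
    using sh_range[of x] unfolding sh_def by linarith+
  show ?thesis
  proof (cases "sh x = -1/2")
    case True
    then have x: "x = of_int ?k - 1/2" unfolding sh_def by linarith
    have "\<forall>y>x - 1. y < x \<longrightarrow> per g y = g (y - of_int (jj x))"
    proof (intro allI impI)
      fix y assume "x - 1 < y" "y < x"
      then have "\<lfloor>y + 1/2\<rfloor> = ?k - 1" using x by (intro floor_unique) linarith+
      then show "per g y = g (y - of_int (jj x))" using True by (simp add: per_def jj_def)
    qed
    then show ?thesis unfolding eventually_at_left_field by (intro exI[of _ "x - 1"]) auto
  next
    case False
    then have x: "of_int ?k < x + 1/2" using a unfolding sh_def by linarith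
    have "\<forall>y>of_int ?k - 1/2. y < x \<longrightarrow> per g y = g (y - of_int (jj x))"
    proof (intro allI impI)
      fix y assume "of_int ?k - 1/2 < y" "y < x"
      then have "\<lfloor>y + 1/2\<rfloor> = ?k" using a by (intro floor_unique) linarith+
      then show "per g y = g (y - of_int (jj x))" using False by (simp add: per_def jj_def)
    qed
    then show ?thesis unfolding eventually_at_left_field using x
      by (intro exI[of _ "of_int ?k - 1/2"]) auto
  qed
qed

lemma jj_val: "sh x = -1/2 \<Longrightarrow> x - of_int (jj x) = 1/2"
  "sh x \<noteq> -1/2 \<Longrightarrow> x - of_int (jj x) = sh x"
  by (auto simp: jj_def sh_def)

lemma per_cont:
  assumes "continuous_on UNIV g" "g (-1/2) = g (1/2)"
  shows "isCont (per g) x"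
proof -
  have cg: "isCont (\<lambda>y. g (y - r)) x" for r
  proof -
    have "isCont g (x - r)" using assms(1) continuous_on_eq_continuous_at by blast
    moreover have "isCont (\<lambda>y. y - r) x" by (intro continuous_intros)
    ultimately show ?thesis using isCont_o2 by blast
  qed
  have "((\<lambda>y. g (y - of_int \<lfloor>x+1/2\<rfloor>)) \<longlongrightarrow> per g x) (at_right x)"
    using cg[of "of_int \<lfloor>x+1/2\<rfloor>"] by (simp add: isCont_def per_def filterlim_at_split)
  then have r: "(per g \<longlongrightarrow> per g x) (at_right x)"
    by (rule tendsto_cong[OF per_right[where x=x and g=g], THEN iffD2])
  have v: "g (x - of_int (jj x)) = per g x"
  proof (cases "sh x = -1/2")
    case True
    show ?thesis unfolding per_sh by (subst jj_val(1)[OF True]) (use assms(2) True in simp)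
  next
    case False
    show ?thesis unfolding per_sh by (subst jj_val(2)[OF False]) simp
  qed
  have "((\<lambda>y. g (y - of_int (jj x))) \<longlongrightarrow> per g x) (at_left x)"
    using cg[of "of_int (jj x)"] v by (simp add: isCont_def filterlim_at_split)
  then have l: "(per g \<longlongrightarrow> per g x) (at_left x)"
    by (rule tendsto_cong[OF per_left[where x=x and g=g], THEN iffD2])
  show ?thesis using l r by (simp add: isCont_def filterlim_split_at)
qed

lemma per_deriv:
  assumes g: "\<And>z. (g has_real_derivative g' z) (at z)"
    and "sh x = -1/2 \<Longrightarrow> g (-1/2) = g (1/2)"
    and "sh x = -1/2 \<Longrightarrow> g' (-1/2) = g' (1/2)"
  shows "(per g has_real_derivative per g' x) (at x)"
proof -
  have dg: "((\<lambda>y. g (y - r)) has_real_derivative g' (x - r)) (at x)" for r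
  proof -
    have "((\<lambda>y. y - r) has_real_derivative 1) (at x)" by (auto intro!: derivative_eq_intros)
    from DERIV_chain2[OF g this] show ?thesis by simp
  qed
  let ?k = "of_int \<lfloor>x+1/2\<rfloor> :: real"
  have "((\<lambda>y. g (y - ?k)) has_real_derivative per g' x) (at_right x)"
    using dg[of ?k] by (auto simp: per_def intro: has_field_derivative_at_within)
  then have "(per g has_real_derivative per g' x) (at_right x)"
    by (subst has_field_derivative_cong_eventually[OF per_right]) (auto simp: per_def)
  then have r: "((\<lambda>y. (per g y - per g x) / (y - x)) \<longlongrightarrow> per g' x) (at_right x)"
    by (simp add: has_field_derivative_iff)
  have v: "g (x - of_int (jj x)) = per g x \<and> g' (x - of_int (jj x)) = per g' x"
  proof (cases "sh x = -1/2")
    case True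
    show ?thesis unfolding per_sh by (subst jj_val(1)[OF True])+ (use assms(2)[OF True] assms(3)[OF True] True in simp)
  next
    case False
    show ?thesis unfolding per_sh by (subst jj_val(2)[OF False])+ simp
  qed
  have "((\<lambda>y. g (y - of_int (jj x))) has_real_derivative per g' x) (at_left x)"
    using dg[of "of_int (jj x)"] v by (auto intro: has_field_derivative_at_within)
  then have "(per g has_real_derivative per g' x) (at_left x)"
    by (subst has_field_derivative_cong_eventually[OF per_left]) (use v in auto)
  then have l: "((\<lambda>y. (per g y - per g x) / (y - x)) \<longlongrightarrow> per g' x) (at_left x)"
    by (simp add: has_field_derivative_iff)
  show ?thesis using l r by (simp add: has_field_derivative_iff filterlim_split_at)
qed


lemma per_cont_on:
  assumes "continuous_on UNIV g" "g (-1/2) = g (1/2)"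
  shows "continuous_on UNIV (per g)"
  using per_cont[OF assms] by (simp add: continuous_at_imp_continuous_on)

lemma deriv_cont_on: "(\<And>z. (g has_real_derivative g' z) (at z)) \<Longrightarrow> continuous_on UNIV g"
  by (meson DERIV_isCont continuous_at_imp_continuous_on)

lemma per_ftc:
  assumes g: "\<And>z. (g has_real_derivative g' z) (at z)" and e: "g (-1/2) = g (1/2)" and "a \<le> b"
  shows "(per g' has_integral (per g b - per g a)) {a..b}"
proof -
  define S where "S = {x. x \<in> {a..b} \<and> sh x = -1/2}"
  have "S \<subseteq> (\<lambda>k. of_int k - 1/2) ` {\<lfloor>a\<rfloor> .. \<lceil>b\<rceil> + 1}"
  proof
    fix x assume "x \<in> S"
    then have x: "a \<le> x" "x \<le> b" "x = of_int \<lfloor>x+1/2\<rfloor> - 1/2" unfolding S_def sh_def by auto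
    have "of_int \<lfloor>a\<rfloor> \<le> a" "b \<le> of_int \<lceil>b\<rceil>" by (auto simp: le_of_int_ceiling)
    then have "of_int \<lfloor>a\<rfloor> \<le> (of_int \<lfloor>x+1/2\<rfloor> :: real)" "(of_int \<lfloor>x+1/2\<rfloor>::real) \<le> of_int (\<lceil>b\<rceil> + 1)"
      using x by linarith+
    then have "\<lfloor>x+1/2\<rfloor> \<in> {\<lfloor>a\<rfloor> .. \<lceil>b\<rceil> + 1}" by (simp only: of_int_le_iff atLeastAtMost_iff) 
    then show "x \<in> (\<lambda>k. of_int k - 1/2) ` {\<lfloor>a\<rfloor> .. \<lceil>b\<rceil> + 1}" using x by (intro image_eqI) auto
  qed
  then have fin: "finite S" by (rule finite_subset) auto
  have cont: "continuous_on {a..b} (per g)"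
    using per_cont_on[OF deriv_cont_on[OF g] e] continuous_on_subset by blast
  show ?thesis
  proof (rule fundamental_theorem_of_calculus_interior_strong[OF fin \<open>a \<le> b\<close> _ cont])
    fix x assume "x \<in> {a<..<b} - S"
    then have "sh x \<noteq> -1/2" unfolding S_def by auto
    then have "(per g has_real_derivative per g' x) (at x)" by (intro per_deriv[OF g]) auto
    then show "(per g has_vector_derivative per g' x) (at x)"
      by (simp add: has_real_derivative_iff_has_vector_derivative)
  qed
qed

lemma per_deriv_shift:
  assumes g: "\<And>z. (g has_real_derivative g' z) (at z)"
    and "g (-1/2) = g (1/2)" "g' (-1/2) = g' (1/2)"
  shows "((\<lambda>x. per g (x - s)) has_real_derivative per g' (x - s)) (at x)"
proof -
  have "((\<lambda>y. y - s) has_real_derivative 1) (at x)" by (auto intro!: derivative_eq_intros)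
  from DERIV_chain2[OF per_deriv[OF g] this] assms show ?thesis by simp
qed

definition pp :: "real \<Rightarrow> real \<Rightarrow> real" where "pp c z = c/26*(12*z^2+23)"
definition dp :: "real \<Rightarrow> real \<Rightarrow> real" where "dp c z = 12*c/13*z"
definition h0 :: "real \<Rightarrow> real \<Rightarrow> real" where "h0 c z = c * pp c z - (pp c z)^2/2"
definition h1 :: "real \<Rightarrow> real \<Rightarrow> real" where "h1 c z = (c - pp c z) * dp c z"
definition h2 :: "real \<Rightarrow> real \<Rightarrow> real" where "h2 c z = (c - pp c z) * (12*c/13) - (dp c z)^2"
definition qq :: "real \<Rightarrow> real \<Rightarrow> real" where "qq c z = c/26*(4*z^3 - z)"
definition dq :: "real \<Rightarrow> real \<Rightarrow> real" where "dq c z = pp c z - 12*c/13"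

lemma d_pp: "(pp c has_real_derivative dp c z) (at z)"
  unfolding pp_def dp_def by (auto intro!: derivative_eq_intros simp: field_simps)
lemma d_h0: "(h0 c has_real_derivative h1 c z) (at z)"
  unfolding h0_def h1_def pp_def dp_def by (auto intro!: derivative_eq_intros simp: field_simps power2_eq_square)
lemma d_h1: "(h1 c has_real_derivative h2 c z) (at z)"
  unfolding h2_def h1_def pp_def dp_def by (auto intro!: derivative_eq_intros simp: field_simps power2_eq_square)
lemma d_qq: "(qq c has_real_derivative dq c z) (at z)"
  unfolding qq_def dq_def pp_def by (auto intro!: derivative_eq_intros simp: field_simps power2_eq_square)
lemma c_h2: "continuous_on UNIV (h2 c)"
  unfolding h2_def pp_def dp_def by (intro continuous_intros)

lemma ends:
  "pp c (-1/2) = pp c (1/2)" "h0 c (-1/2) = h0 c (1/2)" "h1 c (-1/2) = h1 c (1/2)"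
  "h2 c (-1/2) = h2 c (1/2)" "qq c (-1/2) = qq c (1/2)" "dq c (-1/2) = dq c (1/2)"
  by (simp_all add: pp_def h0_def h1_def h2_def qq_def dq_def dp_def field_simps power2_eq_square)

lemma phi_per: "phi c = per (pp c)"
  by (auto simp: fun_eq_iff phi_def per_def pp_def)

lemma mean_pp: "((\<lambda>x. per (pp c) (x - s)) has_integral (12*c/13)) {0..1}"
proof -
  have "((\<lambda>x. per (dq c) (x - s)) has_integral (per (qq c) (1 - s) - per (qq c) (0 - s))) {0..1}"
    by (rule fundamental_theorem_of_calculus)
       (auto simp: has_real_derivative_iff_has_vector_derivative[symmetric]
          intro!: has_field_derivative_at_within per_deriv_shift[OF d_qq ends(5) ends(6)])
  moreover have "per (qq c) (1 - s) = per (qq c) (0 - s)"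
    using per_periodic[of "qq c" "-s"] by simp
  ultimately have "((\<lambda>x. per (dq c) (x - s)) has_integral 0) {0..1}" by simp
  from has_integral_add[OF this has_integral_const_real[of "12*c/13" 0 1]]
  show ?thesis by (simp add: per_def dq_def)
qed

lemma mean_h1: "((\<lambda>x. per (h1 c) (x - s)) has_integral 0) {0..1}"
proof -
  have "((\<lambda>x. per (h1 c) (x - s)) has_integral (per (h0 c) (1 - s) - per (h0 c) (0 - s))) {0..1}"
    by (rule fundamental_theorem_of_calculus)
       (auto simp: has_real_derivative_iff_has_vector_derivative[symmetric]
          intro!: has_field_derivative_at_within per_deriv_shift[OF d_h0 ends(2) ends(3)])
  moreover have "per (h0 c) (1 - s) = per (h0 c) (0 - s)"
    using per_periodic[of "h0 c" "-s"] by simp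
  ultimately show ?thesis by simp
qed


lemma poly_id: "lam*(12*c/13)*pp c z + (3-lam)/2*(dp c z)^2
   = (3*(12*c/13)*c/26 + 23*lam*(12*c/13)*c/26) - h2 c z"
  unfolding pp_def dp_def h2_def by (simp add: field_simps power2_eq_square)

lemma lambda_part:
  fixes c s lam :: real
  shows "is_Lambda_inv_dx (\<lambda>x. lam * mu (\<lambda>x. phi c (x - s)) * phi c (x - s)
            + (3 - lam) / 2 * (per (dp c) (x - s))\<^sup>2) (\<lambda>x. per (h1 c) (x - s))"
proof -
  have mu: "mu (\<lambda>x. phi c (x - s)) = 12*c/13"
    unfolding mu_def phi_per using mean_pp integral_unique by blast
  define K where "K = 3*(12*c/13)*c/26 + 23*lam*(12*c/13)*c/26"
  define V where "V = (\<lambda>x. per (h1 c) (x - s))"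
  define V' where "V' = (\<lambda>x. per (h2 c) (x - s))"
  have F: "lam * mu (\<lambda>x. phi c (x - s)) * phi c (x - s) + (3 - lam) / 2 * (per (dp c) (x - s))\<^sup>2
      = K - V' x" for x
    by (subst mu, unfold K_def V'_def phi_per per_sh, rule poly_id)
  have dV: "(V has_real_derivative V' x) (at x)" for x
    unfolding V_def V'_def by (rule per_deriv_shift[OF d_h1 ends(3) ends(4)])
  have cV: "continuous_on UNIV V" by (rule deriv_cont_on[OF dV])
  have cV': "continuous_on UNIV V'"
    unfolding V'_def
    by (rule continuous_on_compose2[OF per_cont_on[OF c_h2 ends(4)]]) (auto intro!: continuous_intros)
  have perV: "periodic1 V" unfolding periodic1_def V_def
  proof
    fix x show "per (h1 c) (x + 1 - s) = per (h1 c) (x - s)"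
      using per_periodic[of "h1 c" "x - s"] by (simp add: algebra_simps)
  qed
  show ?thesis
    unfolding is_Lambda_inv_dx_def F
  proof (intro conjI allI impI)
    show "periodic1 (\<lambda>x. per (h1 c) (x - s))" using perV by (simp add: V_def)
    fix \<psi> assume "smooth1 \<psi> \<and> periodic1 \<psi>"
    then have sm: "\<And>n x. (deriv^^n) \<psi> differentiable (at x)" and pp1: "\<And>x. \<psi> (x + 1) = \<psi> x"
      by (auto simp: smooth1_def periodic1_def)
    have d0: "(\<psi> has_real_derivative deriv \<psi> x) (at x)" for x
      using sm[of 0 x] by (simp add: DERIV_deriv_iff_real_differentiable)
    have d1: "(deriv \<psi> has_real_derivative deriv (deriv \<psi>) x) (at x)" for x
      using sm[of 1 x] by (simp add: DERIV_deriv_iff_real_differentiable)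
    have c1: "continuous_on UNIV (deriv \<psi>)" by (rule deriv_cont_on[OF d1])
    have c2: "continuous_on UNIV (deriv (deriv \<psi>))"
    proof -
      have "isCont (deriv (deriv \<psi>)) x" for x
        using sm[of "Suc (Suc 0)" x] differentiable_imp_continuous_within by simp
      then show ?thesis by (simp add: continuous_at_imp_continuous_on)
    qed
    have pd: "deriv \<psi> (x + 1) = deriv \<psi> x" for x
    proof -
      have "((\<lambda>y. y + 1) has_real_derivative 1) (at x)" by (auto intro!: derivative_eq_intros)
      from DERIV_chain2[OF d0[of "x+1"] this]
      have "((\<lambda>y. \<psi> (y + 1)) has_real_derivative deriv \<psi> (x+1)) (at x)" by simp
      then have "(\<psi> has_real_derivative deriv \<psi> (x+1)) (at x)" using pp1 by simp
      then show ?thesis using d0[of x] DERIV_unique by blast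
    qed
    have dP: "((\<lambda>x. V x * deriv \<psi> x) has_real_derivative
        V' x * deriv \<psi> x + V x * deriv (deriv \<psi>) x) (at x)" for x
      using DERIV_mult[OF dV d1] by (simp add: algebra_simps)
    have I1: "((\<lambda>x. V' x * deriv \<psi> x + V x * deriv (deriv \<psi>) x) has_integral
          (V 1 * deriv \<psi> 1 - V 0 * deriv \<psi> 0)) {0..1}"
      by (rule fundamental_theorem_of_calculus)
         (auto simp: has_real_derivative_iff_has_vector_derivative[symmetric]
          intro!: has_field_derivative_at_within dP)
    have "V 1 = V 0" "deriv \<psi> 1 = deriv \<psi> 0"
      using perV[unfolded periodic1_def, rule_format, of 0] pd[of 0] by auto
    with I1 have I1': "((\<lambda>x. V' x * deriv \<psi> x + V x * deriv (deriv \<psi>) x) has_integral 0) {0..1}"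
      by simp
    have I2: "(V has_integral 0) {0..1}" unfolding V_def by (rule mean_h1)
    have I3: "(deriv \<psi> has_integral (\<psi> 1 - \<psi> 0)) {0..1}"
      by (rule fundamental_theorem_of_calculus)
         (auto simp: has_real_derivative_iff_has_vector_derivative[symmetric]
          intro!: has_field_derivative_at_within d0)
    then have I3': "(deriv \<psi> has_integral 0) {0..1}" using pp1[of 0] by simp
    have "continuous_on {0..1} (\<lambda>x. V' x * deriv \<psi> x)"
      using cV' c1 by (intro continuous_on_mult) (auto intro: continuous_on_subset)
    then have I4: "((\<lambda>x. V' x * deriv \<psi> x) has_integral integral {0..1} (\<lambda>x. V' x * deriv \<psi> x)) {0..1}"
      using integrable_continuous_interval has_integral_integral by blast
    define J where "J = integral {0..1} (\<lambda>x. V' x * deriv \<psi> x)"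
    have HA: "((\<lambda>x. mu \<psi> * V x - (V' x * deriv \<psi> x + V x * deriv (deriv \<psi>) x) + V' x * deriv \<psi> x)
        has_integral (mu \<psi> * 0 - 0 + J)) {0..1}"
      unfolding J_def
      by (intro has_integral_add has_integral_diff has_integral_mult_right I1' I2 I4)
    have eA: "(\<lambda>x. mu \<psi> * V x - (V' x * deriv \<psi> x + V x * deriv (deriv \<psi>) x) + V' x * deriv \<psi> x)
        = (\<lambda>x. V x * (mu \<psi> - deriv (deriv \<psi>) x))"
      by (auto simp: fun_eq_iff algebra_simps)
    have HA': "((\<lambda>x. per (h1 c) (x - s) * (mu \<psi> - deriv (deriv \<psi>) x)) has_integral J) {0..1}"
      using HA unfolding eA by (simp add: V_def)
    have HB: "((\<lambda>x. K * deriv \<psi> x - V' x * deriv \<psi> x) has_integral (K * 0 - J)) {0..1}"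
      unfolding J_def by (intro has_integral_diff has_integral_mult_right I3' I4)
    have eB: "(\<lambda>x. K * deriv \<psi> x - V' x * deriv \<psi> x) = (\<lambda>x. (K - V' x) * deriv \<psi> x)"
      by (auto simp: fun_eq_iff algebra_simps)
    have HB': "((\<lambda>x. (K - V' x) * deriv \<psi> x) has_integral - J) {0..1}"
      using HB unfolding eB by simp
    show "(\<lambda>x. per (h1 c) (x - s) * (mu \<psi> - deriv (deriv \<psi>) x)) integrable_on {0..1}"
      using HA' by blast
    show "(\<lambda>x. (K - V' x) * deriv \<psi> x) integrable_on {0..1}" using HB' by blast
    show "integral {0..1} (\<lambda>x. per (h1 c) (x - s) * (mu \<psi> - deriv (deriv \<psi>) x)) =
          - integral {0..1} (\<lambda>x. (K - V' x) * deriv \<psi> x)"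
      using integral_unique[OF HA'] integral_unique[OF HB'] by simp
  qed
qed


lemma lin2:
  fixes L :: "real \<times> real \<Rightarrow> real"
  assumes "linear L" shows "L (a, b) = a * L (1, 0) + b * L (0, 1)"
proof -
  have "(a, b) = a *\<^sub>R (1::real, 0::real) + b *\<^sub>R (0, 1)" by simp
  then have "L (a, b) = L (a *\<^sub>R (1::real, 0::real) + b *\<^sub>R (0, 1))" by simp
  also have "\<dots> = L (a *\<^sub>R (1::real, 0::real)) + L (b *\<^sub>R (0, 1))"
    by (rule linear_add[OF assms])
  also have "\<dots> = a *\<^sub>R L (1, 0) + b *\<^sub>R L (0, 1)"
    by (simp only: linear_scale[OF assms])
  also have "\<dots> = a * L (1, 0) + b * L (0, 1)" by simp
  finally show ?thesis .
qed

lemma int_supp: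
  fixes f :: "real \<Rightarrow> real"
  assumes "continuous_on UNIV f" "\<And>x. R < \<bar>x\<bar> \<Longrightarrow> f x = 0" "a \<le> -R" "R \<le> b"
  shows "integral {a..b} f = integral {-R..R} f"
proof -
  have "(f has_integral integral {-R..R} f) {-R..R}"
    by (intro integrable_integral integrable_continuous_interval continuous_on_subset[OF assms(1)]) auto
  then have "(f has_integral integral {-R..R} f) {a..b}"
    by (rule has_integral_on_superset) (use assms in auto)
  then show ?thesis by (rule integral_unique)
qed

lemma cper:
  assumes "continuous_on UNIV g" "g (-1/2) = g (1/2)"
  shows "continuous_on UNIV (\<lambda>q::real\<times>real. per g (snd q - c * fst q))"
  by (rule continuous_on_compose2[OF per_cont_on[OF assms]]) (auto intro!: continuous_intros)

lemma weak_part: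
  fixes c :: real
  assumes tf: "test_fun2 \<psi>"
  shows "((\<lambda>p. phi c (snd p - c * fst p) * frechet_derivative \<psi> (at p) (1, 0)
     + (phi c (snd p - c * fst p))\<^sup>2 / 2 * frechet_derivative \<psi> (at p) (0, 1)
     - per (h1 c) (snd p - c * fst p) * \<psi> p) has_integral 0) UNIV"
proof -
  define D1 where "D1 = (\<lambda>p. frechet_derivative \<psi> (at p) (1::real, 0::real))"
  define D2 where "D2 = (\<lambda>p. frechet_derivative \<psi> (at p) (0::real, 1::real))"
  from tf have sm: "smooth2 \<psi>" and bd: "bounded {p. \<psi> p \<noteq> 0}" by (auto simp: test_fun2_def)
  from sm have "Ck2 0 \<psi>" "Ck2 1 \<psi>" by (auto simp: smooth2_def)
  then have c\<psi>: "continuous_on UNIV \<psi>" and dif: "\<And>p. \<psi> differentiable (at p)"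
    and cD1: "continuous_on UNIV D1" and cD2: "continuous_on UNIV D2"
    by (auto simp: D1_def D2_def)
  have fd: "(\<psi> has_derivative frechet_derivative \<psi> (at p)) (at p)" for p
    using dif frechet_derivative_works by blast
  have linFD: "linear (frechet_derivative \<psi> (at p))" for p
    using fd has_derivative_linear by blast
  obtain R where R: "R > 0" "\<And>p. \<psi> p \<noteq> 0 \<Longrightarrow> norm p \<le> R"
    using bd unfolding bounded_pos by force
  have zero: "\<psi> p = 0 \<and> D1 p = 0 \<and> D2 p = 0" if "norm p > R" for p
  proof -
    have op: "open {q::real\<times>real. R < norm q}"
      by (intro open_Collect_less continuous_intros)
    have z: "\<psi> q = 0" if "R < norm q" for q
    proof (rule ccontr)
      assume "\<psi> q \<noteq> 0" then have "norm q \<le> R" by (rule R(2))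
      with that show False by simp
    qed
    have "((\<lambda>_. 0) has_derivative frechet_derivative \<psi> (at p)) (at p)"
      by (rule has_derivative_transform_within_open[OF fd op]) (use that z in auto)
    moreover have "((\<lambda>_. 0::real) has_derivative (\<lambda>_. 0)) (at p)" by (rule has_derivative_const)
    ultimately have "frechet_derivative \<psi> (at p) = (\<lambda>_. 0)" using has_derivative_unique by blast
    then show ?thesis using z that by (simp add: D1_def D2_def)
  qed
  have P1: "((\<lambda>\<tau>. \<psi> (\<tau>, y + c*\<tau>)) has_real_derivative (D1 (t, y+c*t) + c * D2 (t, y+c*t))) (at t)"
    for t y
  proof -
    have "((\<lambda>\<tau>. (\<tau>, y + c*\<tau>)) has_derivative (\<lambda>h. (h, 0 + c*h))) (at t)"
      by (intro has_derivative_Pair has_derivative_ident has_derivative_add has_derivative_const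
          has_derivative_mult_right)
    then have g: "((\<lambda>\<tau>. (\<tau>, y + c*\<tau>)) has_derivative (\<lambda>h. (h, c*h))) (at t)" by simp
    from diff_chain_at[OF g fd[of "(t, y + c*t)"]]
    have "((\<lambda>\<tau>. \<psi> (\<tau>, y + c*\<tau>)) has_derivative
        (\<lambda>h. frechet_derivative \<psi> (at (t, y + c*t)) (h, c*h))) (at t)" by (simp add: o_def)
    moreover have "(\<lambda>h. frechet_derivative \<psi> (at (t, y + c*t)) (h, c*h))
        = (*) (D1 (t, y+c*t) + c * D2 (t, y+c*t))"
    proof (rule ext)
      fix h show "frechet_derivative \<psi> (at (t, y + c*t)) (h, c*h) = (D1 (t, y+c*t) + c * D2 (t, y+c*t)) * h"
        using lin2[OF linFD[of "(t, y+c*t)"], of h "c*h"] by (simp add: D1_def D2_def algebra_simps)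
    qed
    ultimately show ?thesis by (simp add: has_field_derivative_def)
  qed
  have P2: "((\<lambda>x. \<psi> (t, x)) has_real_derivative D2 (t, x)) (at x)" for t x
  proof -
    have g: "((\<lambda>x. (t, x)) has_derivative (\<lambda>h. (0, h))) (at x)"
      by (intro has_derivative_Pair has_derivative_ident has_derivative_const)
    from diff_chain_at[OF g fd[of "(t, x)"]]
    have "((\<lambda>x. \<psi> (t, x)) has_derivative (\<lambda>h. frechet_derivative \<psi> (at (t, x)) (0, h))) (at x)"
      by (simp add: o_def)
    moreover have "(\<lambda>h. frechet_derivative \<psi> (at (t, x)) (0, h)) = (*) (D2 (t, x))"
    proof (rule ext)
      fix h show "frechet_derivative \<psi> (at (t, x)) (0, h) = D2 (t, x) * h"
        using lin2[OF linFD[of "(t, x)"], of 0 h] by (simp add: D2_def algebra_simps)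
    qed
    ultimately show ?thesis by (simp add: has_field_derivative_def)
  qed
  define T where "T = R + 1"
  have T: "T > R" "T > 0" using R by (auto simp: T_def)
  have nT: "R < norm (t, x)" if "T \<le> \<bar>t\<bar> \<or> T \<le> \<bar>x\<bar>" for t x :: real
    using that norm_fst_le[of t x] norm_snd_le[of x t] T by auto
  have box: "R < norm q" if "q \<notin> cbox (-T, -T) (T, T)" for q
  proof -
    obtain t x where q: "q = (t, x)" by force
    with that have "T \<le> \<bar>t\<bar> \<or> T \<le> \<bar>x\<bar>" by (auto simp: cbox_interval)
    then show ?thesis using nT q by auto
  qed
  define Bf where "Bf = (\<lambda>q. per (h1 c) (snd q - c * fst q) * \<psi> q + per (h0 c) (snd q - c * fst q) * D2 q)"
  have cBf: "continuous_on UNIV Bf"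
    unfolding Bf_def
    by (intro continuous_on_add continuous_on_mult cper[OF deriv_cont_on[OF d_h1] ends(3)]
        cper[OF deriv_cont_on[OF d_h0] ends(2)] c\<psi> cD2)
  have Binner: "integral {-T..T} (\<lambda>x. Bf (t, x)) = 0" for t
  proof -
    have dd: "((\<lambda>x. per (h0 c) (x - c*t) * \<psi> (t, x)) has_real_derivative Bf (t, x)) (at x)" for x
      using DERIV_mult[OF per_deriv_shift[OF d_h0 ends(2) ends(3)] P2] by (simp add: Bf_def algebra_simps)
    have "((\<lambda>x. Bf (t, x)) has_integral
        (per (h0 c) (T - c*t) * \<psi> (t, T) - per (h0 c) (-T - c*t) * \<psi> (t, -T))) {-T..T}"
    proof -
      have vd: "((\<lambda>x. per (h0 c) (x - c*t) * \<psi> (t, x)) has_vector_derivative Bf (t, x)) (at x within {-T..T})" for x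
        using dd[of x] by (simp add: has_real_derivative_iff_has_vector_derivative[symmetric] has_field_derivative_at_within)
      show ?thesis using fundamental_theorem_of_calculus[OF _ vd] T by simp
    qed
    moreover have "\<psi> (t, T) = 0" "\<psi> (t, -T) = 0" using zero nT T by auto
    ultimately show ?thesis by (simp add: integral_unique)
  qed
  have "integral (cbox (-T, -T) (T, T)) Bf = integral (cbox (-T) T) (\<lambda>t. integral (cbox (-T) T) (\<lambda>x. Bf (t, x)))"
    by (rule integral_prod_continuous) (rule continuous_on_subset[OF cBf], auto)
  also have "\<dots> = 0" using Binner by (simp add: cbox_interval)
  finally have i0: "integral (cbox (-T, -T) (T, T)) Bf = 0" .
  have "Bf integrable_on cbox (-T, -T) (T, T)"
    by (rule integrable_continuous) (rule continuous_on_subset[OF cBf], auto)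
  from integrable_integral[OF this] i0 have "(Bf has_integral 0) (cbox (-T, -T) (T, T))" by simp
  then have HB: "(Bf has_integral 0) UNIV"
    by (rule has_integral_on_superset) (auto simp: Bf_def dest!: box zero)
  define Af where "Af = (\<lambda>q. per (pp c) (snd q - c * fst q) * (D1 q + c * D2 q))"
  have cAf: "continuous_on UNIV Af"
    unfolding Af_def
    by (intro continuous_on_add continuous_on_mult cper[OF deriv_cont_on[OF d_pp] ends(1)]
        continuous_on_const cD1 cD2)
  define T' where "T' = T + \<bar>c\<bar> * T"
  have shift: "integral {-T..T} (\<lambda>x. Af (t, x)) = integral {-T'..T'} (\<lambda>y. Af (t, y + c*t))"
    if "t \<in> {-T..T}" for t
  proof -
    have ct: "\<bar>c*t\<bar> \<le> \<bar>c\<bar> * T" using that by (auto simp: abs_mult intro!: mult_left_mono)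
    have cf: "continuous_on UNIV (\<lambda>x. Af (t, x))"
      by (rule continuous_on_compose2[OF cAf]) (auto intro!: continuous_intros)
    have sp: "Af (t, x) = 0" if "R < \<bar>x\<bar>" for x
      using zero[of "(t,x)"] nT[of t x] that norm_snd_le[of x t] by (auto simp: Af_def)
    have "(\<lambda>y. Af (t, y + c*t)) = (\<lambda>x. Af (t, x)) \<circ> (+) (c*t)" by (auto simp: fun_eq_iff add.commute)
    then have "integral {-T'..T'} (\<lambda>y. Af (t, y + c*t)) = integral {-T' + c*t..T' + c*t} (\<lambda>x. Af (t, x))"
      using integral_shift_Icc_real by metis
    also have "\<dots> = integral {-R..R} (\<lambda>x. Af (t, x))"
      using ct T unfolding T'_def by (intro int_supp[OF cf sp]) (auto simp: abs_le_iff)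
    also have "\<dots> = integral {-T..T} (\<lambda>x. Af (t, x))"
      using T by (intro int_supp[OF cf sp, symmetric]) auto
    finally show ?thesis by simp
  qed
  have Ainner: "integral {-T..T} (\<lambda>t. Af (t, y + c*t)) = 0" for y
  proof -
    have dd: "((\<lambda>t. per (pp c) y * \<psi> (t, y + c*t)) has_real_derivative Af (t, y + c*t)) (at t)" for t
      using DERIV_cmult[OF P1, of "per (pp c) y"] by (simp add: Af_def)
    have "((\<lambda>t. Af (t, y + c*t)) has_integral
        (per (pp c) y * \<psi> (T, y + c*T) - per (pp c) y * \<psi> (-T, y + c*(-T)))) {-T..T}"
    proof -
      have vd: "((\<lambda>t. per (pp c) y * \<psi> (t, y + c*t)) has_vector_derivative Af (t, y + c*t)) (at t within {-T..T})" for t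
        using dd[of t] by (simp add: has_real_derivative_iff_has_vector_derivative[symmetric] has_field_derivative_at_within)
      show ?thesis using fundamental_theorem_of_calculus[OF _ vd] T by simp
    qed
    moreover have "\<psi> (T, y + c*T) = 0" "\<psi> (-T, y + c*(-T)) = 0" using zero nT T by auto
    ultimately show ?thesis by (simp add: integral_unique)
  qed
  have cA2: "continuous_on (cbox (-T, -T') (T, T')) (\<lambda>(t, y). Af (t, y + c*t))"
  proof -
    have "continuous_on UNIV (\<lambda>p. Af (fst p, snd p + c * fst p))"
      by (rule continuous_on_compose2[OF cAf]) (auto intro!: continuous_intros)
    then show ?thesis by (auto simp: split_def intro: continuous_on_subset)
  qed
  have "integral (cbox (-T, -T) (T, T)) Af = integral (cbox (-T) T) (\<lambda>t. integral (cbox (-T) T) (\<lambda>x. Af (t, x)))"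
    by (rule integral_prod_continuous) (rule continuous_on_subset[OF cAf], auto)
  also have "\<dots> = integral (cbox (-T) T) (\<lambda>t. integral (cbox (-T') T') (\<lambda>y. Af (t, y + c*t)))"
    by (rule integral_cong) (use shift in \<open>auto simp: cbox_interval\<close>)
  also have "\<dots> = integral (cbox (-T') T') (\<lambda>y. integral (cbox (-T) T) (\<lambda>t. Af (t, y + c*t)))"
    by (rule integral_swap_continuous[where f = "\<lambda>t y. Af (t, y + c*t)"]) (use cA2 in simp)
  also have "\<dots> = 0" using Ainner by (simp add: cbox_interval)
  finally have i0: "integral (cbox (-T, -T) (T, T)) Af = 0" .
  have "Af integrable_on cbox (-T, -T) (T, T)"
    by (rule integrable_continuous) (rule continuous_on_subset[OF cAf], auto)
  from integrable_integral[OF this] i0 have "(Af has_integral 0) (cbox (-T, -T) (T, T))" by simp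
  then have HA: "(Af has_integral 0) UNIV"
    by (rule has_integral_on_superset) (auto simp: Af_def dest!: box zero)
  have eq: "(\<lambda>p. phi c (snd p - c * fst p) * frechet_derivative \<psi> (at p) (1, 0)
     + (phi c (snd p - c * fst p))\<^sup>2 / 2 * frechet_derivative \<psi> (at p) (0, 1)
     - per (h1 c) (snd p - c * fst p) * \<psi> p) = (\<lambda>p. Af p - Bf p)"
    by (auto simp: fun_eq_iff Af_def Bf_def D1_def D2_def phi_per per_sh h0_def algebra_simps power2_eq_square)
  show ?thesis unfolding eq using has_integral_diff[OF HA HB] by simp
qed


theorem theorem6p1:
  fixes c :: real and lam :: int
  assumes "lam \<noteq> 0" and "lam \<noteq> 1"
  shows "weak_solution (real_of_int lam) (\<lambda>t x. phi c (x - c * t))"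
proof -
  have ux: "\<forall>t a b. a \<le> b \<longrightarrow> ((\<lambda>x. per (dp c) (x - c*t)) has_integral
      (phi c (b - c*t) - phi c (a - c*t))) {a..b}"
  proof (intro allI impI)
    fix t a b :: real assume ab: "a \<le> b"
    have "(per (dp c) has_integral (per (pp c) (b + -(c*t)) - per (pp c) (a + -(c*t)))) {a + -(c*t)..b + -(c*t)}"
      by (rule per_ftc[OF d_pp ends(1)]) (use ab in simp)
    then have "((per (dp c) \<circ> (+) (-(c*t))) has_integral (per (pp c) (b + -(c*t)) - per (pp c) (a + -(c*t)))) {a..b}"
      using has_integral_shift_Icc_real by blast
    moreover have "per (dp c) \<circ> (+) (-(c*t)) = (\<lambda>x. per (dp c) (x - c*t))" by (auto simp: fun_eq_iff)
    ultimately show "((\<lambda>x. per (dp c) (x - c*t)) has_integral (phi c (b - c*t) - phi c (a - c*t))) {a..b}"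
      by (simp add: phi_per)
  qed
  have A1: "continuous_on UNIV (\<lambda>p. phi c (snd p - c * fst p))"
    unfolding phi_per by (rule cper[OF deriv_cont_on[OF d_pp] ends(1)])
  have A2: "\<forall>t. periodic1 (\<lambda>x. phi c (x - c * t))"
    unfolding periodic1_def phi_per
  proof (intro allI)
    fix t x show "per (pp c) (x + 1 - c * t) = per (pp c) (x - c * t)"
      using per_periodic[of "pp c" "x - c*t"] by (simp add: algebra_simps)
  qed
  have A3: "\<forall>t. is_Lambda_inv_dx (\<lambda>x. real_of_int lam * mu (\<lambda>x. phi c (x - c*t)) * phi c (x - c*t)
            + (3 - real_of_int lam) / 2 * (per (dp c) (x - c*t))\<^sup>2) (\<lambda>x. per (h1 c) (x - c*t))"
    using lambda_part by blast
  have A4: "\<forall>\<psi>. test_fun2 \<psi> \<longrightarrow> ((\<lambda>p. phi c (snd p - c * fst p) * frechet_derivative \<psi> (at p) (1, 0)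
     + (phi c (snd p - c * fst p))\<^sup>2 / 2 * frechet_derivative \<psi> (at p) (0, 1)
     - per (h1 c) (snd p - c * fst p) * \<psi> p) has_integral 0) UNIV"
    using weak_part by blast
  show ?thesis
    unfolding weak_solution_def
    apply (intro conjI)
      apply (rule A1)
     apply (rule A2)
    apply (rule exI[of _ "\<lambda>t x. per (dp c) (x - c*t)"], rule exI[of _ "\<lambda>t x. per (h1 c) (x - c*t)"])
    using ux A3 A4 by blast
qed

end
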